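(* Let $L$ be a Lie algebra over a field, $I$ an ideal of $L$, $s\in L$, and $k\ge2$ such that $[Is^k]=(0)$. Then for every integer $t\ge2$ and all elements $a_1,\dots,a_N\in I$, where $N=kt-1$, the operator $\operatorname{ad}([a_1s^{k-1}])\cdots\operatorname{ad}([a_Ns^{k-1}])$ on $L$ is a linear combination of operators of the form \[P'\,\operatorname{ad}(s)^{k-1}\prod_{j=0}^{t-2}\big(\operatorname{ad}(a_{i+j})\operatorname{ad}(s)^{k-1}\big)\,P'',\] where $i$ is an index with $1\le i$ and $i+t-2\le N$, and $P',P''$ are (possibly empty) products of the operators $\operatorname{ad}(a_1),\dots,\operatorname{ad}(a_N),\operatorname{ad}(s)$.
   Context: $[a,b,c,\dots]$ denotes the left-normed commutator $[\cdots[[a,b],c],\dots]$, and $[ab^k]=[a,b,\dots,b]$ with $b$ repeated $k$ times; $[Is^k]$ denotes the set $\{[as^k]:a\in I\}$. $\operatorname{ad}(a)$ is the operator $x\mapsto[x,a]$; operators act on the right, so a product $uv$ of operators means first $u$ then $v$. *)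

theory Defs
  imports Main "HOL.Vector_Spaces"
begin

definition lie_algebra :: "('k::field \<Rightarrow> 'a::ab_group_add \<Rightarrow> 'a) \<Rightarrow> ('a \<Rightarrow> 'a \<Rightarrow> 'a) \<Rightarrow> bool" where
  "lie_algebra scale br \<longleftrightarrow>
     vector_space scale \<and>
     (\<forall>x y z. br (x + y) z = br x z + br y z) \<and>
     (\<forall>x y z. br x (y + z) = br x y + br x z) \<and>
     (\<forall>c x y. br (scale c x) y = scale c (br x y)) \<and>
     (\<forall>c x y. br x (scale c y) = scale c (br x y)) \<and>
     (\<forall>x. br x x = 0) \<and>
     (\<forall>x y z. br (br x y) z + br (br y z) x + br (br z x) y = 0)"

definition lie_ideal :: "('k::field \<Rightarrow> 'a::ab_group_add \<Rightarrow> 'a) \<Rightarrow> ('a \<Rightarrow> 'a \<Rightarrow> 'a) \<Rightarrow> 'a set \<Rightarrow> bool" where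
  "lie_ideal scale br I \<longleftrightarrow>
     0 \<in> I \<and> (\<forall>x\<in>I. \<forall>y\<in>I. x + y \<in> I) \<and> (\<forall>c. \<forall>x\<in>I. scale c x \<in> I) \<and>
     (\<forall>x\<in>I. \<forall>y. br x y \<in> I \<and> br y x \<in> I)"

definition ad :: "('a \<Rightarrow> 'a \<Rightarrow> 'a) \<Rightarrow> 'a \<Rightarrow> 'a \<Rightarrow> 'a" where
  "ad br a = (\<lambda>x. br x a)"

text \<open>Left-normed commutator [a b^k] = a ad(b)^k.\<close>
definition lcomm_pow :: "('a \<Rightarrow> 'a \<Rightarrow> 'a) \<Rightarrow> 'a \<Rightarrow> 'a \<Rightarrow> nat \<Rightarrow> 'a" where
  "lcomm_pow br a b k = (ad br b ^^ k) a"

text \<open>Product of operators u1 u2 ... un acting on the right: first u1, then u2, ...\<close>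
definition opprod :: "('a \<Rightarrow> 'a) list \<Rightarrow> 'a \<Rightarrow> 'a" where
  "opprod us = fold (\<lambda>u acc. u \<circ> acc) us id"

definition lin_comb_of :: "('k::field \<Rightarrow> 'a::ab_group_add \<Rightarrow> 'a) \<Rightarrow> ('a \<Rightarrow> 'a) set \<Rightarrow> ('a \<Rightarrow> 'a) \<Rightarrow> bool" where
  "lin_comb_of scale S T \<longleftrightarrow>
     (\<exists>F c. finite F \<and> F \<subseteq> S \<and> T = (\<lambda>x. \<Sum>f\<in>F. scale (c f) (f x)))"

end

theory Submission
  imports Defs
begin


definition linop :: "('k::field \<Rightarrow> 'a::ab_group_add \<Rightarrow> 'a) \<Rightarrow> ('a \<Rightarrow> 'a) \<Rightarrow> bool" where
  "linop scale U \<longleftrightarrow> (\<forall>x y. U (x + y) = U x + U y) \<and> (\<forall>c x. U (scale c x) = scale c (U x))"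

lemma opprod_Nil[simp]: "opprod [] = id" by (simp add: opprod_def)

lemma fold_comp_acc: "fold (\<lambda>u acc. u \<circ> acc) us (acc :: 'a \<Rightarrow> 'a) = fold (\<lambda>u acc. u \<circ> acc) us id \<circ> acc"
proof (induction us arbitrary: acc)
  case Nil then show ?case by simp
next
  case (Cons u us)
  have "fold (\<lambda>u acc. u \<circ> acc) (u # us) acc = fold (\<lambda>u acc. u \<circ> acc) us (u \<circ> acc)"
    by (simp only: fold.simps comp_apply)
  also have "\<dots> = fold (\<lambda>u acc. u \<circ> acc) us id \<circ> (u \<circ> acc)"
    by (rule Cons.IH)
  also have "\<dots> = (fold (\<lambda>u acc. u \<circ> acc) us id \<circ> u) \<circ> acc" by (simp add: comp_assoc)
  also have "fold (\<lambda>u acc. u \<circ> acc) us id \<circ> u = fold (\<lambda>u acc. u \<circ> acc) us u"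
    using Cons.IH[of u] by metis
  also have "fold (\<lambda>u acc. u \<circ> acc) us u = fold (\<lambda>u acc. u \<circ> acc) (u # us) id"
    by simp
  finally show ?case .
qed

lemma opprod_Cons[simp]: "opprod (u # us) = opprod us \<circ> u"
  unfolding opprod_def using fold_comp_acc[of us u] by simp

lemma opprod_append[simp]: "opprod (xs @ ys) = opprod ys \<circ> opprod xs"
  by (induction xs) (simp_all add: comp_assoc)

lemma opprod_replicate: "opprod (replicate e f) = f ^^ e"
  by (induction e) (simp_all add: funpow_Suc_right del: funpow.simps)

lemma linop_zero: "linop scale U \<Longrightarrow> U 0 = 0"
  unfolding linop_def by (metis add_cancel_left_left add_0)

lemma linop_sum: "linop scale U \<Longrightarrow> U (\<Sum>f\<in>F. g f) = (\<Sum>f\<in>F. U (g f))"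
  by (induction F rule: infinite_finite_induct) (auto simp: linop_zero linop_def)

lemma lc_regroup:
  assumes vs: "vector_space scale" and fin: "finite J" and sub: "h ` J \<subseteq> S"
  shows "lin_comb_of scale S (\<lambda>x. \<Sum>j\<in>J. scale (e j) (h j x))"
proof -
  interpret vector_space scale by (rule vs)
  define c where "c f = (\<Sum>j\<in>{j. j \<in> J \<and> h j = f}. e j)" for f
  have "(\<Sum>j\<in>J. scale (e j) (h j x)) = (\<Sum>f\<in>h ` J. scale (c f) (f x))" for x
  proof -
    have "(\<Sum>j\<in>J. scale (e j) (h j x)) = (\<Sum>f\<in>h ` J. \<Sum>j\<in>{j. j \<in> J \<and> h j = f}. scale (e j) (h j x))"
      by (rule sum.image_gen[OF fin])
    also have "\<dots> = (\<Sum>f\<in>h ` J. scale (c f) (f x))"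
      unfolding c_def scale_sum_left by (intro sum.cong refl) auto
    finally show ?thesis .
  qed
  then show ?thesis unfolding lin_comb_of_def using fin sub
    by (intro exI[of _ "h ` J"] exI[of _ c]) auto
qed

lemma lc_single:
  assumes vs: "vector_space scale" and "f \<in> S" shows "lin_comb_of scale S f"
proof -
  interpret vector_space scale by (rule vs)
  show ?thesis unfolding lin_comb_of_def using assms(2)
    by (intro exI[of _ "{f}"] exI[of _ "\<lambda>_. 1"]) auto
qed

lemma lc_mono: "lin_comb_of scale S T \<Longrightarrow> S \<subseteq> S' \<Longrightarrow> lin_comb_of scale S' T"
  unfolding lin_comb_of_def by blast

lemma lc_add:
  assumes vs: "vector_space scale" and "lin_comb_of scale S T" "lin_comb_of scale S U"
  shows "lin_comb_of scale S (\<lambda>x. T x + U x)"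
proof -
  obtain F1 c1 where 1: "finite F1" "F1 \<subseteq> S" "T = (\<lambda>x. \<Sum>f\<in>F1. scale (c1 f) (f x))"
    using assms(2) unfolding lin_comb_of_def by blast
  obtain F2 c2 where 2: "finite F2" "F2 \<subseteq> S" "U = (\<lambda>x. \<Sum>f\<in>F2. scale (c2 f) (f x))"
    using assms(3) unfolding lin_comb_of_def by blast
  have "lin_comb_of scale S (\<lambda>x. \<Sum>j\<in>F1 <+> F2. scale (case_sum c1 c2 j) (case_sum id id j x))"
    by (rule lc_regroup[OF vs]) (use 1 2 in auto)
  also have "(\<lambda>x. \<Sum>j\<in>F1 <+> F2. scale (case_sum c1 c2 j) (case_sum id id j x)) = (\<lambda>x. T x + U x)"
    using 1 2 by (simp add: sum.Plus o_def)
  finally show ?thesis .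
qed

lemma lc_scale:
  assumes vs: "vector_space scale" and "lin_comb_of scale S T"
  shows "lin_comb_of scale S (\<lambda>x. scale r (T x))"
proof -
  interpret vector_space scale by (rule vs)
  obtain F1 c1 where 1: "finite F1" "F1 \<subseteq> S" "T = (\<lambda>x. \<Sum>f\<in>F1. scale (c1 f) (f x))"
    using assms(2) unfolding lin_comb_of_def by blast
  show ?thesis unfolding lin_comb_of_def using 1
    by (intro exI[of _ F1] exI[of _ "\<lambda>f. r * c1 f"]) (auto simp: scale_sum_right)
qed

lemma lc_filter:
  assumes vs: "vector_space scale" and "lin_comb_of scale S T" and "\<forall>f\<in>S. f \<in> S' \<or> f = (\<lambda>x. 0)"
  shows "lin_comb_of scale S' T"
proof -
  interpret vector_space scale by (rule vs)
  obtain F1 c1 where 1: "finite F1" "F1 \<subseteq> S" "T = (\<lambda>x. \<Sum>f\<in>F1. scale (c1 f) (f x))"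
    using assms(2) unfolding lin_comb_of_def by blast
  have "(\<Sum>f\<in>F1. scale (c1 f) (f x)) = (\<Sum>f\<in>F1 \<inter> S'. scale (c1 f) (f x))" for x
    by (rule sum.mono_neutral_right) (use 1 assms(3) in auto)
  then show ?thesis unfolding lin_comb_of_def using 1
    by (intro exI[of _ "F1 \<inter> S'"] exI[of _ c1]) auto
qed

lemma lc_compose:
  assumes vs: "vector_space scale" and "lin_comb_of scale S1 T" "lin_comb_of scale S2 U" "linop scale U"
  shows "lin_comb_of scale {g \<circ> f |f g. f \<in> S1 \<and> g \<in> S2} (U \<circ> T)"
proof -
  interpret vector_space scale by (rule vs)
  obtain F1 c1 where 1: "finite F1" "F1 \<subseteq> S1" "T = (\<lambda>x. \<Sum>f\<in>F1. scale (c1 f) (f x))"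
    using assms(2) unfolding lin_comb_of_def by blast
  obtain F2 c2 where 2: "finite F2" "F2 \<subseteq> S2" "U = (\<lambda>x. \<Sum>f\<in>F2. scale (c2 f) (f x))"
    using assms(3) unfolding lin_comb_of_def by blast
  have "(U \<circ> T) x = (\<Sum>p\<in>F1 \<times> F2. scale (c1 (fst p) * c2 (snd p)) ((snd p \<circ> fst p) x))" for x
  proof -
    have "(U \<circ> T) x = (\<Sum>f\<in>F1. U (scale (c1 f) (f x)))"
      using 1(3) linop_sum[OF assms(4)] by simp
    also have "\<dots> = (\<Sum>f\<in>F1. scale (c1 f) (U (f x)))"
      using assms(4) unfolding linop_def by simp
    also have "\<dots> = (\<Sum>f\<in>F1. \<Sum>g\<in>F2. scale (c1 f * c2 g) (g (f x)))"
      by (subst 2(3)) (simp add: scale_sum_right)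
    also have "\<dots> = (\<Sum>p\<in>F1 \<times> F2. scale (c1 (fst p) * c2 (snd p)) ((snd p \<circ> fst p) x))"
      by (subst sum.cartesian_product) (simp add: case_prod_beta)
    finally show ?thesis .
  qed
  then have "U \<circ> T = (\<lambda>x. \<Sum>p\<in>F1 \<times> F2. scale (c1 (fst p) * c2 (snd p)) ((snd p \<circ> fst p) x))"
    by auto
  moreover have "lin_comb_of scale {g \<circ> f |f g. f \<in> S1 \<and> g \<in> S2} \<dots>"
  proof (rule lc_regroup[OF vs])
    show "(\<lambda>p. snd p \<circ> fst p) ` (F1 \<times> F2) \<subseteq> {g \<circ> f |f g. f \<in> S1 \<and> g \<in> S2}"
    proof (rule image_subsetI)
      fix p assume "p \<in> F1 \<times> F2"
      then have "fst p \<in> S1" "snd p \<in> S2" using 1 2 by auto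
      then show "snd p \<circ> fst p \<in> {g \<circ> f |f g. f \<in> S1 \<and> g \<in> S2}" by blast
    qed
  qed (use 1 2 in simp)
  ultimately show ?thesis by simp
qed



lemma la_vs: "lie_algebra scale br \<Longrightarrow> vector_space scale"
  unfolding lie_algebra_def by blast

lemma la_br0l: "lie_algebra scale br \<Longrightarrow> br 0 y = 0"
  unfolding lie_algebra_def by (metis add_0 add_cancel_right_right)

lemma la_linop: "lie_algebra scale br \<Longrightarrow> linop scale (ad br z)"
  unfolding lie_algebra_def linop_def ad_def by blast

lemma grp_aux: "\<lbrakk>(p::'a::ab_group_add) + a = 0; q + b = 0; a + (r + b) = 0\<rbrakk> \<Longrightarrow> p + q = r"
  by (metis add.right_neutral group_cancel.add2)

lemma la_jac:
  assumes L: "lie_algebra scale br"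
  shows "br y (br X z) = br (br y X) z - br (br y z) X"
proof -
  have addl: "br (u + v) w = br u w + br v w" for u v w using L unfolding lie_algebra_def by blast
  have addr: "br w (u + v) = br w u + br w v" for u v w using L unfolding lie_algebra_def by blast
  have alt: "br u u = 0" for u using L unfolding lie_algebra_def by blast
  have J: "br (br y X) z + br (br X z) y + br (br z y) X = 0" using L unfolding lie_algebra_def by blast
  have z0: "br 0 v = 0" for v by (rule la_br0l[OF L])
  have anti: "br u v = - br v u" for u v
  proof -
    have "0 = br (u + v) (u + v)" by (simp add: alt)
    also have "\<dots> = br u v + br v u" by (simp only: addl addr) (simp add: alt)
    finally have "br u v + br v u = 0" by simp
    then show ?thesis by (simp add: eq_neg_iff_add_eq_0)
  qed
  have neg: "br (-u) v = - br u v" for u v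
  proof -
    have "br u v + br (-u) v = 0" using addl[of u "-u" v] z0 by simp
    then show ?thesis by (simp add: eq_neg_iff_add_eq_0 add.commute)
  qed
  have "br (br X z) y = - br y (br X z)" by (rule anti)
  moreover have "br (br z y) X = - br (br y z) X" by (subst anti[of z y]) (rule neg)
  ultimately have "br y (br X z) + br (br X z) y = 0" "br (br y z) X + br (br z y) X = 0"
    "br (br X z) y + (br (br y X) z + br (br z y) X) = 0"
    using J by (simp_all add: eq_neg_iff_add_eq_0 algebra_simps)
  then have "br y (br X z) + br (br y z) X = br (br y X) z" by (rule grp_aux)
  then show ?thesis by (simp add: algebra_simps)
qed

lemma ad_expand:
  assumes L: "lie_algebra scale br"
  shows "lin_comb_of scale {opprod (replicate m (ad br s) @ [ad br z] @ replicate (n-m) (ad br s)) | m. m \<le> n}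
           (ad br (lcomm_pow br z s n))"
proof (induction n)
  case 0
  have "ad br z \<in> {opprod (replicate m (ad br s) @ [ad br z] @ replicate (0-m) (ad br s)) | m. m \<le> 0}"
    by force
  then show ?case using lc_single[OF la_vs[OF L]] by (simp add: lcomm_pow_def)
next
  case (Suc n)
  let ?S = "ad br s"
  let ?W = "\<lambda>n. {opprod (replicate m (ad br s) @ [ad br z] @ replicate (n-m) (ad br s)) | m. m \<le> n}"
  define X where "X = lcomm_pow br z s n"
  have vs: "vector_space scale" by (rule la_vs[OF L])
  interpret vector_space scale by (rule vs)
  have eq: "ad br (lcomm_pow br z s (Suc n)) = (\<lambda>y. (?S \<circ> ad br X) y + scale (-1) ((ad br X \<circ> ?S) y))"
  proof
    fix y
    have "lcomm_pow br z s (Suc n) = br X s" by (simp add: lcomm_pow_def X_def ad_def)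
    then show "ad br (lcomm_pow br z s (Suc n)) y = (?S \<circ> ad br X) y + scale (-1) ((ad br X \<circ> ?S) y)"
      by (simp add: ad_def la_jac[OF L])
  qed
  have c1: "lin_comb_of scale {g \<circ> f |f g. f \<in> ?W n \<and> g \<in> {?S}} (?S \<circ> ad br X)"
    by (rule lc_compose[OF vs Suc.IH[folded X_def] lc_single[OF vs] la_linop[OF L]]) simp
  have c2: "lin_comb_of scale {g \<circ> f |f g. f \<in> {?S} \<and> g \<in> ?W n} (ad br X \<circ> ?S)"
    by (rule lc_compose[OF vs lc_single[OF vs] Suc.IH[folded X_def] la_linop[OF L]]) simp
  have s1: "{g \<circ> f |f g. f \<in> ?W n \<and> g \<in> {?S}} \<subseteq> ?W (Suc n)"
  proof
    fix h assume "h \<in> {g \<circ> f |f g. f \<in> ?W n \<and> g \<in> {?S}}"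
    then obtain m where m: "m \<le> n" "h = ?S \<circ> opprod (replicate m ?S @ [ad br z] @ replicate (n-m) ?S)"
      by blast
    have "replicate (Suc n - m) ?S = replicate (n-m) ?S @ [?S]"
      using m(1) by (simp add: Suc_diff_le replicate_append_same)
    then have "h = opprod (replicate m ?S @ [ad br z] @ replicate (Suc n - m) ?S)"
      using m(2) by (simp add: comp_assoc)
    then show "h \<in> ?W (Suc n)" using m(1) by force
  qed
  have s2: "{g \<circ> f |f g. f \<in> {?S} \<and> g \<in> ?W n} \<subseteq> ?W (Suc n)"
  proof
    fix h assume "h \<in> {g \<circ> f |f g. f \<in> {?S} \<and> g \<in> ?W n}"
    then obtain m where m: "m \<le> n" "h = opprod (replicate m ?S @ [ad br z] @ replicate (n-m) ?S) \<circ> ?S"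
      by blast
    then have "h = opprod (replicate (Suc m) ?S @ [ad br z] @ replicate (Suc n - Suc m) ?S)"
      by (simp add: comp_assoc)
    then show "h \<in> ?W (Suc n)" using m(1) by force
  qed
  show ?case unfolding eq
    by (rule lc_add[OF vs lc_mono[OF c1 s1] lc_scale[OF vs lc_mono[OF c2 s2]]])
qed



definition blk :: "('a \<Rightarrow> 'a \<Rightarrow> 'a) \<Rightarrow> 'a \<Rightarrow> (nat \<Rightarrow> 'a) \<Rightarrow> nat \<Rightarrow> (nat \<Rightarrow> nat) \<Rightarrow> nat \<Rightarrow> ('a \<Rightarrow> 'a) list" where
  "blk br s a k m l = replicate (m l) (ad br s) @ ad br (a l) # replicate (k - 1 - m l) (ad br s)"

lemma prod_expand:
  assumes L: "lie_algebra scale br"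
  shows "lin_comb_of scale {opprod (concat (map (blk br s a k m) [1..<n+1])) | m. \<forall>l. m l \<le> k-1}
     (opprod (map (\<lambda>j. ad br (lcomm_pow br (a j) s (k-1))) [1..<n+1]))"
proof (induction n)
  case 0
  have "id \<in> {opprod (concat (map (blk br s a k m) [1..<0+1])) | m. \<forall>l. m l \<le> k-1}"
    by (rule CollectI, rule exI[of _ "\<lambda>_. 0"]) simp
  then show ?case using lc_single[OF la_vs[OF L]] by simp
next
  case (Suc n)
  have vs: "vector_space scale" by (rule la_vs[OF L])
  let ?W = "\<lambda>n. {opprod (concat (map (blk br s a k m) [1..<n+1])) | m. \<forall>l. m l \<le> k-1}"
  let ?D = "\<lambda>j. ad br (lcomm_pow br (a j) s (k-1))"
  have eq: "opprod (map ?D [1..<Suc n+1]) = ?D (Suc n) \<circ> opprod (map ?D [1..<n+1])"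
    by simp
  have c: "lin_comb_of scale {g \<circ> f |f g. f \<in> ?W n \<and> g \<in>
      {opprod (replicate m (ad br s) @ [ad br (a (Suc n))] @ replicate (k-1-m) (ad br s)) | m. m \<le> k-1}}
      (?D (Suc n) \<circ> opprod (map ?D [1..<n+1]))"
    by (rule lc_compose[OF vs Suc.IH ad_expand[OF L] la_linop[OF L]])
  have sub: "{g \<circ> f |f g. f \<in> ?W n \<and> g \<in>
      {opprod (replicate m (ad br s) @ [ad br (a (Suc n))] @ replicate (k-1-m) (ad br s)) | m. m \<le> k-1}}
      \<subseteq> ?W (Suc n)"
  proof
    fix h assume "h \<in> {g \<circ> f |f g. f \<in> ?W n \<and> g \<in>
      {opprod (replicate m (ad br s) @ [ad br (a (Suc n))] @ replicate (k-1-m) (ad br s)) | m. m \<le> k-1}}"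
    then obtain m \<mu> where m: "\<forall>l. m l \<le> k-1" "\<mu> \<le> k-1"
      "h = opprod (replicate \<mu> (ad br s) @ [ad br (a (Suc n))] @ replicate (k-1-\<mu>) (ad br s))
           \<circ> opprod (concat (map (blk br s a k m) [1..<n+1]))"
      by blast
    define m' where "m' = m(Suc n := \<mu>)"
    have me: "map (blk br s a k m') [1..<n+1] = map (blk br s a k m) [1..<n+1]"
      by (rule map_cong) (auto simp: blk_def m'_def)
    have bl: "blk br s a k m' (Suc n) = replicate \<mu> (ad br s) @ [ad br (a (Suc n))] @ replicate (k-1-\<mu>) (ad br s)"
      by (simp add: blk_def m'_def)
    have up: "[1..<Suc n+1] = [1..<n+1] @ [Suc n]" by simp
    have "concat (map (blk br s a k m') [1..<Suc n+1]) = concat (map (blk br s a k m) [1..<n+1]) @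
       (replicate \<mu> (ad br s) @ [ad br (a (Suc n))] @ replicate (k-1-\<mu>) (ad br s))"
      by (simp only: up map_append concat_append me) (simp add: bl)
    then have "h = opprod (concat (map (blk br s a k m') [1..<Suc n+1]))"
      using m(3) by (simp only: opprod_append)
    moreover have "\<forall>l. m' l \<le> k-1" using m by (simp add: m'_def)
    ultimately show "h \<in> ?W (Suc n)" by blast
  qed
  show ?case unfolding eq by (rule lc_mono[OF c sub])
qed



lemma upt_split: "i \<le> j \<Longrightarrow> j \<le> k \<Longrightarrow> [i..<k] = [i..<j] @ [j..<k]"
  by (metis le_add_diff_inverse upt_add_eq_append)

lemma opprod_fix0:
  assumes L: "lie_algebra scale br" shows "set ys \<subseteq> range (ad br) \<Longrightarrow> opprod ys 0 = 0"
  by (induction ys) (auto simp: ad_def la_br0l[OF L])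

lemma set_blk: "set (concat (map (blk br s a k m) L)) \<subseteq> range (ad br)"
  by (auto simp: blk_def)

lemma set_blk2: "set L \<subseteq> {1..N} \<Longrightarrow>
   set (concat (map (blk br s a k m) L)) \<subseteq> insert (ad br s) ((\<lambda>j. ad br (a j)) ` {1..N})"
  by (auto simp: blk_def)

lemma zero_word0:
  assumes L: "lie_algebra scale br" and Id: "lie_ideal scale br I"
    and nil: "\<forall>x\<in>I. lcomm_pow br x s k = 0" and b: "b \<in> I" and e: "e \<ge> k"
    and ys: "set ys \<subseteq> range (ad br)"
  shows "opprod (xs @ [ad br b] @ replicate e (ad br s) @ ys) x = 0"
proof -
  define y where "y = br (opprod xs x) b"
  have yI: "y \<in> I" using Id b unfolding lie_ideal_def y_def by blast
  have fp: "(ad br s ^^ n) 0 = 0" for n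
    by (induction n) (auto simp: ad_def la_br0l[OF L])
  have "(ad br s ^^ e) y = (ad br s ^^ (e - k)) ((ad br s ^^ k) y)"
    using e by (metis funpow_add le_add_diff_inverse2 o_apply)
  also have "(ad br s ^^ k) y = 0" using nil yI unfolding lcomm_pow_def by blast
  finally have "(ad br s ^^ e) y = 0" using fp by simp
  then show ?thesis using opprod_fix0[OF L ys]
    by (simp add: opprod_replicate y_def ad_def)
qed

lemma zero_word:
  assumes L: "lie_algebra scale br" and Id: "lie_ideal scale br I"
    and nil: "\<forall>x\<in>I. lcomm_pow br x s k = 0" and aI: "\<forall>j\<in>{1..N}. a j \<in> I"
    and mb: "\<forall>l. m l \<le> k-1" and l: "1 \<le> l" "Suc l \<le> N" and lt: "m l < m (Suc l)"
  shows "opprod (concat (map (blk br s a k m) [1..<Suc N])) = (\<lambda>x. 0)"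
proof
  fix x
  let ?S = "ad br s"
  have up: "[1..<Suc N] = [1..<l] @ l # Suc l # [Suc (Suc l)..<Suc N]"
  proof -
    have "[1..<Suc N] = [1..<l] @ [l..<Suc N]" by (rule upt_split) (use l in auto)
    moreover have "[l..<Suc N] = l # [Suc l..<Suc N]" by (rule upt_conv_Cons) (use l in auto)
    moreover have "[Suc l..<Suc N] = Suc l # [Suc (Suc l)..<Suc N]" by (rule upt_conv_Cons) (use l in auto)
    ultimately show ?thesis by simp
  qed
  define xs where "xs = concat (map (blk br s a k m) [1..<l]) @ replicate (m l) ?S"
  define ys where "ys = ad br (a (Suc l)) # replicate (k - 1 - m (Suc l)) ?S @ concat (map (blk br s a k m) [Suc (Suc l)..<Suc N])"
  have "concat (map (blk br s a k m) [1..<Suc N]) =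
      xs @ [ad br (a l)] @ replicate (k - 1 - m l + m (Suc l)) ?S @ ys"
    unfolding up xs_def ys_def by (simp add: blk_def replicate_add)
  moreover have "opprod (xs @ [ad br (a l)] @ replicate (k - 1 - m l + m (Suc l)) ?S @ ys) x = 0"
  proof (rule zero_word0[OF L Id nil])
    show "a l \<in> I" using aI l by auto
    show "k \<le> k - 1 - m l + m (Suc l)" using lt mb[rule_format, of l] by linarith
    show "set ys \<subseteq> range (ad br)"
      using set_blk[of br s a k m "[Suc (Suc l)..<Suc N]"] by (auto simp: ys_def)
  qed
  ultimately show "opprod (concat (map (blk br s a k m) [1..<Suc N])) x = 0" by simp
qed

lemma rep_split: "\<mu> \<le> n \<Longrightarrow> replicate n x = replicate (n-\<mu>) x @ replicate \<mu> x"
  by (metis le_add_diff_inverse2 replicate_add)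

lemma mid_id:
  assumes "\<forall>l\<in>set L. m l = \<mu>" "\<mu> \<le> k-1"
  shows "replicate \<mu> (ad br s) @ concat (map (\<lambda>l. ad br (a l) # replicate (k-1) (ad br s)) L)
     = concat (map (blk br s a k m) L) @ replicate \<mu> (ad br s)"
  using assms(1)
proof (induction L)
  case Nil then show ?case by simp
next
  case (Cons l L)
  have r: "replicate (k-1) (ad br s) = replicate (k-1-\<mu>) (ad br s) @ replicate \<mu> (ad br s)"
    by (rule rep_split[OF assms(2)])
  have "replicate \<mu> (ad br s) @ concat (map (\<lambda>l. ad br (a l) # replicate (k-1) (ad br s)) (l # L))
     = replicate \<mu> (ad br s) @ ad br (a l) # replicate (k-1-\<mu>) (ad br s) @
        (replicate \<mu> (ad br s) @ concat (map (\<lambda>l. ad br (a l) # replicate (k-1) (ad br s)) L))"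
    unfolding r by simp
  also have "\<dots> = replicate \<mu> (ad br s) @ ad br (a l) # replicate (k-1-\<mu>) (ad br s) @
        (concat (map (blk br s a k m) L) @ replicate \<mu> (ad br s))"
    using Cons by simp
  finally show ?case using Cons.prems by (simp add: blk_def[of br s a k m l])
qed



lemma good_word:
  fixes m :: "nat \<Rightarrow> nat" and k t :: nat
  assumes k: "k \<ge> 2" and t: "t \<ge> 2" and mb: "\<forall>l. m l \<le> k-1"
    and mono: "\<forall>l. 1 \<le> l \<and> Suc l < k*t \<longrightarrow> m (Suc l) \<le> m l"
  shows "opprod (concat (map (blk br s a k m) [1..<k*t])) \<in>
     { opprod (P1 @ replicate (k-1) (ad br s)
               @ concat (map (\<lambda>j. ad br (a (i+j)) # replicate (k-1) (ad br s)) [0..<t-1])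
               @ P2)
       | i P1 P2. 1 \<le> i \<and> i + t - 2 \<le> k*t-1
           \<and> set P1 \<subseteq> insert (ad br s) ((\<lambda>j. ad br (a j)) ` {1..k*t-1})
           \<and> set P2 \<subseteq> insert (ad br s) ((\<lambda>j. ad br (a j)) ` {1..k*t-1}) }"
proof -
  let ?S = "ad br s"
  let ?All = "insert (ad br s) ((\<lambda>j. ad br (a j)) ` {1..k*t-1})"
  let ?C = "\<lambda>l. ad br (a l) # replicate (k-1) ?S"
  define m' where "m' l = (if l = 0 then k-1 else if l < k*t then m l else 0)" for l
  have kt: "k*t \<ge> 4" using mult_le_mono[OF k t] by simp
  have dec: "\<And>l. m' (Suc l) \<le> m' l" unfolding m'_def using mb mono by auto
  have anti: "\<And>i j. i \<le> j \<Longrightarrow> m' j \<le> m' i" by (rule lift_Suc_antimono_le[of m', OF dec])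
  have m'b: "m' l \<le> k-1" for l unfolding m'_def using mb by auto
  have "\<exists>q<k. m' (q*t) = m' (Suc q * t)"
  proof (rule ccontr)
    assume "\<not> ?thesis"
    then have lt: "\<forall>q<k. m' (Suc q * t) < m' (q*t)"
      using anti by (metis le_add2 le_neq_implies_less mult_Suc)
    have "q \<le> k \<Longrightarrow> m' (q*t) + q \<le> m' 0" for q
    proof (induction q)
      case 0 then show ?case by simp
    next
      case (Suc q)
      then have "m' (q*t) + q \<le> m' 0" "m' (Suc q * t) < m' (q*t)" using lt by auto
      then show ?case by simp
    qed
    from this[of k] have "m' (k*t) + k \<le> m' 0" by simp
    moreover have "m' 0 = k-1" by (simp add: m'_def)
    ultimately show False using k by simp
  qed
  then obtain q where q: "q < k" "m' (q*t) = m' (Suc q * t)" by blast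
  define j where "j = q*t"
  define \<mu> where "\<mu> = m' j"
  have jt: "j + t \<le> k*t" using q(1) mult_le_mono1[of "Suc q" k t] unfolding j_def by simp
  have jt': "Suc q * t = j + t" unfolding j_def by simp
  have const: "m' l = \<mu>" if "j \<le> l" "l \<le> j+t" for l
    using anti[OF that(1)] anti[OF that(2)] q(2) unfolding \<mu>_def j_def jt'[unfolded j_def] by simp
  have \<mu>k: "\<mu> \<le> k-1" using m'b[of j] by (simp add: \<mu>_def)
  have wm: "map (blk br s a k m) [1..<k*t] = map (blk br s a k m') [1..<k*t]"
    by (rule map_cong) (auto simp: blk_def m'_def)
  have split: "[1..<k*t] = [1..<j+1] @ [j+1..<j+t] @ [j+t..<k*t]"
  proof -
    have "[1..<k*t] = [1..<j+1] @ [j+1..<k*t]" by (rule upt_split) (use jt t in auto)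
    moreover have "[j+1..<k*t] = [j+1..<j+t] @ [j+t..<k*t]" by (rule upt_split) (use jt t in auto)
    ultimately show ?thesis by simp
  qed
  obtain P1 where P1: "set P1 \<subseteq> ?All" "concat (map (blk br s a k m') [1..<j+1]) = P1 @ replicate (k-1-\<mu>) ?S"
  proof (cases "j = 0")
    case True
    then have "\<mu> = k-1" unfolding \<mu>_def m'_def by simp
    then show ?thesis using that[of "[]"] True by simp
  next
    case False
    have up: "[1..<j+1] = [1..<j] @ [j]" using False by simp
    have jN: "j \<le> k*t-1" using jt t by simp
    have s1: "set (concat (map (blk br s a k m') [1..<j])) \<subseteq> ?All"
      by (rule set_blk2) (use jN in auto)
    show ?thesis
    proof (rule that[of "concat (map (blk br s a k m') [1..<j]) @ replicate \<mu> ?S @ [ad br (a j)]"])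
      show "set (concat (map (blk br s a k m') [1..<j]) @ replicate \<mu> ?S @ [ad br (a j)]) \<subseteq> ?All"
        using s1 False jN by auto
      show "concat (map (blk br s a k m') [1..<j+1]) =
         (concat (map (blk br s a k m') [1..<j]) @ replicate \<mu> ?S @ [ad br (a j)]) @ replicate (k-1-\<mu>) ?S"
        unfolding up by (simp add: blk_def \<mu>_def)
    qed
  qed
  obtain P2 where P2: "set P2 \<subseteq> ?All" "concat (map (blk br s a k m') [j+t..<k*t]) = replicate \<mu> ?S @ P2"
  proof (cases "j + t = k*t")
    case True
    then have "\<mu> = 0" using const[of "j+t"] kt k t unfolding m'_def by auto
    then show ?thesis using that[of "[]"] True by simp
  next
    case False
    then have lt: "j + t < k*t" using jt by simp
    have up: "[j+t..<k*t] = (j+t) # [Suc (j+t)..<k*t]" using lt by (simp add: upt_conv_Cons)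
    have s1: "set (concat (map (blk br s a k m') [Suc (j+t)..<k*t])) \<subseteq> ?All"
      by (rule set_blk2) auto
    have mu: "m' (j+t) = \<mu>" using const by simp
    show ?thesis
    proof (rule that[of "ad br (a (j+t)) # replicate (k-1-\<mu>) ?S @ concat (map (blk br s a k m') [Suc (j+t)..<k*t])"])
      show "set (ad br (a (j+t)) # replicate (k-1-\<mu>) ?S @ concat (map (blk br s a k m') [Suc (j+t)..<k*t])) \<subseteq> ?All"
        using s1 lt t by auto
      show "concat (map (blk br s a k m') [j+t..<k*t]) =
         replicate \<mu> ?S @ ad br (a (j+t)) # replicate (k-1-\<mu>) ?S @ concat (map (blk br s a k m') [Suc (j+t)..<k*t])"
        unfolding up by (simp add: blk_def mu)
    qed
  qed
  have mid: "replicate \<mu> ?S @ concat (map ?C [j+1..<j+t]) = concat (map (blk br s a k m') [j+1..<j+t]) @ replicate \<mu> ?S"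
    by (rule mid_id) (use const \<mu>k in auto)
  have pat: "concat (map (\<lambda>jj. ad br (a (j+1+jj)) # replicate (k-1) ?S) [0..<t-1]) = concat (map ?C [j+1..<j+t])"
  proof -
    have "map (\<lambda>jj. ad br (a (j+1+jj)) # replicate (k-1) ?S) [0..<t-1] = map ?C (map (\<lambda>jj. jj + (j+1)) [0..<t-1])"
      by (simp add: add.commute)
    also have "\<dots> = map ?C [j+1..<j+t]" unfolding map_add_upt using t by (simp add: add.commute)
    finally show ?thesis by simp
  qed
  have "concat (map (blk br s a k m) [1..<k*t]) = P1 @ replicate (k-1) ?S @ concat (map ?C [j+1..<j+t]) @ P2"
  proof -
    have "concat (map (blk br s a k m) [1..<k*t]) =
        (P1 @ replicate (k-1-\<mu>) ?S) @ (concat (map (blk br s a k m') [j+1..<j+t]) @ replicate \<mu> ?S) @ P2"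
      unfolding wm unfolding split by (simp only: map_append concat_append P1(2) P2(2) append_assoc)
    also have "\<dots> = P1 @ (replicate (k-1-\<mu>) ?S @ replicate \<mu> ?S) @ concat (map ?C [j+1..<j+t]) @ P2"
      unfolding mid[symmetric] by simp
    also have "replicate (k-1-\<mu>) ?S @ replicate \<mu> ?S = replicate (k-1) ?S"
      using rep_split[OF \<mu>k, of ?S] by simp
    finally show ?thesis by simp
  qed
  then have "opprod (concat (map (blk br s a k m) [1..<k*t])) =
     opprod (P1 @ replicate (k-1) ?S @ concat (map (\<lambda>jj. ad br (a (j+1+jj)) # replicate (k-1) ?S) [0..<t-1]) @ P2)"
    using pat by simp
  moreover have "1 \<le> j+1 \<and> j + 1 + t - 2 \<le> k*t-1" using jt t by simp
  ultimately show ?thesis using P1(1) P2(1) by blast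
qed



theorem lemma7:
  fixes scale :: "'k::field \<Rightarrow> 'a::ab_group_add \<Rightarrow> 'a"
    and br :: "'a \<Rightarrow> 'a \<Rightarrow> 'a"
    and I :: "'a set" and s :: 'a and k t :: nat and a :: "nat \<Rightarrow> 'a"
  assumes "lie_algebra scale br"
    and "lie_ideal scale br I"
    and "k \<ge> 2"
    and "\<forall>x\<in>I. lcomm_pow br x s k = 0"
    and "t \<ge> 2"
    and "\<forall>j\<in>{1..k*t-1}. a j \<in> I"
  shows "lin_comb_of scale
     { opprod (P1 @ replicate (k-1) (ad br s)
               @ concat (map (\<lambda>j. ad br (a (i+j)) # replicate (k-1) (ad br s)) [0..<t-1])
               @ P2)
       | i P1 P2. 1 \<le> i \<and> i + t - 2 \<le> k*t-1
           \<and> set P1 \<subseteq> insert (ad br s) ((\<lambda>j. ad br (a j)) ` {1..k*t-1})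
           \<and> set P2 \<subseteq> insert (ad br s) ((\<lambda>j. ad br (a j)) ` {1..k*t-1}) }
     (opprod (map (\<lambda>j. ad br (lcomm_pow br (a j) s (k-1))) [1..<k*t]))"
proof -
  have kt: "k*t \<ge> 4" using mult_le_mono[OF assms(3) assms(5)] by simp
  then have e: "k*t-1+1 = k*t" "Suc (k*t-1) = k*t" by auto
  have pe: "lin_comb_of scale {opprod (concat (map (blk br s a k m) [1..<k*t])) | m. \<forall>l. m l \<le> k-1}
     (opprod (map (\<lambda>j. ad br (lcomm_pow br (a j) s (k-1))) [1..<k*t]))"
    using prod_expand[OF assms(1), of s a k "k*t-1"] unfolding e .
  show ?thesis
  proof (rule lc_filter[OF la_vs[OF assms(1)] pe], intro ballI)
    fix f assume "f \<in> {opprod (concat (map (blk br s a k m) [1..<k*t])) | m. \<forall>l. m l \<le> k-1}"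
    then obtain m where m: "\<forall>l. m l \<le> k-1" "f = opprod (concat (map (blk br s a k m) [1..<k*t]))" by blast
    show "f \<in> { opprod (P1 @ replicate (k-1) (ad br s)
               @ concat (map (\<lambda>j. ad br (a (i+j)) # replicate (k-1) (ad br s)) [0..<t-1])
               @ P2)
       | i P1 P2. 1 \<le> i \<and> i + t - 2 \<le> k*t-1
           \<and> set P1 \<subseteq> insert (ad br s) ((\<lambda>j. ad br (a j)) ` {1..k*t-1})
           \<and> set P2 \<subseteq> insert (ad br s) ((\<lambda>j. ad br (a j)) ` {1..k*t-1}) } \<or> f = (\<lambda>x. 0)"
    proof (cases "\<exists>l. 1 \<le> l \<and> Suc l < k*t \<and> m l < m (Suc l)")
      case True
      then obtain l where l: "1 \<le> l" "Suc l < k*t" "m l < m (Suc l)" by blast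
      have "opprod (concat (map (blk br s a k m) [1..<Suc (k*t-1)])) = (\<lambda>x. 0)"
        by (rule zero_word[OF assms(1) assms(2) assms(4) assms(6) m(1) l(1) _ l(3)]) (use l(2) in simp)
      then show ?thesis using m(2) unfolding e by simp
    next
      case False
      then have mono: "\<forall>l. 1 \<le> l \<and> Suc l < k*t \<longrightarrow> m (Suc l) \<le> m l" by (meson not_le)
      show ?thesis
        apply (rule disjI1)
        unfolding m(2) by (rule good_word[OF assms(3) assms(5) m(1) mono])
    qed
  qed
qed


end
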